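(* Let $\lambda$ be a prime number, $\mathsf{R}$ a commutative ring and $f=\sum_{k=1}^t a_k\mathbf{x}^{\mathbf{e}_k}\in\mathsf{R}[x_1,\ldots,x_n]$, and suppose that a fixed term of $f$ avoids collision in the image $f(z^{s_1},\ldots,z^{s_n})$ for a uniformly random $\mathbf{s}\in\{0,\ldots,\lambda-1\}^n$ with probability at least $3/4$. Let $\mathbf{r}_1,\ldots,\mathbf{r}_{2n}$ be row vectors chosen independently and uniformly at random from $\{0,\ldots,\lambda-1\}^n$, and let $Q$ be the $2n\times n$ matrix with rows $\mathbf{r}_1,\ldots,\mathbf{r}_{2n}$. Then, conditioned on the event that this term of $f$ avoids collision in all of the images $f(z^{r_{i1}},\ldots,z^{r_{in}})$ for $1\le i\le 2n$, the matrix $Q$ has rank less than $n$ with probability at most $(9\lambda/16)^{-n}$.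
   Context: The $a_k$ are nonzero and the exponent vectors $\mathbf{e}_k\in\mathbb{Z}_{\ge0}^n$ pairwise distinct. The $i$th term of $f$ avoids collision under $\mathbf{s}$ if $\mathbf{e}_i\cdot\mathbf{s}\ne\mathbf{e}_j\cdot\mathbf{s}$ for all $j\ne i$. *)

theory Defs
  imports Main "Jordan_Normal_Form.DL_Rank"
begin

text \<open>Exponent vectors and substitution vectors in \<open>\<nat>^n\<close> are functions
  \<open>nat \<Rightarrow> nat\<close> of which only the entries at \<open>0..<n\<close> matter.\<close>

definition dotp :: "nat \<Rightarrow> (nat \<Rightarrow> nat) \<Rightarrow> (nat \<Rightarrow> nat) \<Rightarrow> nat" where
  "dotp n e s = (\<Sum>j<n. e j * s j)"

definition avoids_collision ::
  "nat \<Rightarrow> nat \<Rightarrow> (nat \<Rightarrow> nat \<Rightarrow> nat) \<Rightarrow> nat \<Rightarrow> (nat \<Rightarrow> nat) \<Rightarrow> bool" where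
  "avoids_collision n t e i s \<longleftrightarrow> (\<forall>j<t. j \<noteq> i \<longrightarrow> dotp n (e i) s \<noteq> dotp n (e j) s)"

definition row_matrix :: "nat \<Rightarrow> (nat \<Rightarrow> nat \<Rightarrow> nat) \<Rightarrow> real mat" where
  "row_matrix n r = mat (2 * n) n (\<lambda>(i, j). real (r i j))"

end

theory Submission imports Defs begin

lemma kernel_rat:
  fixes r :: "nat \<Rightarrow> nat \<Rightarrow> nat"
  assumes rk: "vec_space.rank (2*n) (row_matrix n r) < n"
  shows "\<exists>w::nat\<Rightarrow>rat. (\<exists>j<n. w j \<noteq> 0) \<and> (\<forall>k<2*n. (\<Sum>j<n. of_nat (r k j) * w j) = 0)"
proof -
  define AR where "AR = row_matrix n r"
  have AR: "AR \<in> carrier_mat (2*n) n" by (simp add: AR_def row_matrix_def)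
  interpret V: vec_space "TYPE(real)" "2*n" .
  show ?thesis
  proof (cases "distinct (cols AR)")
    case False
    then obtain i j where ij: "i \<noteq> j" "cols AR ! i = cols AR ! j" "i < length (cols AR)" "j < length (cols AR)"
      using distinct_conv_nth by blast
    then have c: "col AR i = col AR j" "i<n" "j<n" using AR by auto
    have rij: "r k i = r k j" if "k < 2*n" for k
    proof -
      have "col AR i $ k = col AR j $ k" using c by simp
      thus ?thesis using that c AR by (simp add: AR_def row_matrix_def)
    qed
    define w where "w = (\<lambda>l. if l = i then 1 else if l = j then -1 else (0::rat))"
    have "(\<Sum>l<n. of_nat (r k l) * w l) = 0" if "k < 2*n" for k
    proof -
      have "(\<Sum>l<n. of_nat (r k l) * w l) = (\<Sum>l\<in>{i,j}. of_nat (r k l) * w l)"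
        by (rule sum.mono_neutral_right) (use c in \<open>auto simp: w_def\<close>)
      also have "\<dots> = 0" using ij(1) rij[OF that] by (simp add: w_def)
      finally show ?thesis .
    qed
    moreover have "w i \<noteq> 0" by (simp add: w_def)
    ultimately show ?thesis using c by blast
  next
    case True
    have "V.rank AR \<noteq> n" using rk AR_def by simp
    then have "\<not> V.lin_indpt (set (cols AR))" using V.lin_indpt_full_rank[OF AR True] by blast
    then obtain v where v: "v \<in> carrier_vec n" "v \<noteq> 0\<^sub>v n" "AR *\<^sub>v v = 0\<^sub>v (2*n)"
      using V.lin_depE[OF AR _ True] by blast
    define AQ where "AQ = mat (2*n) n (\<lambda>(i,j). of_nat (r i j) :: rat)"
    have AQ: "AQ \<in> carrier_mat (2*n) n" by (simp add: AQ_def)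
    have AR_eq: "AR = map_mat of_rat AQ"
      by (rule eq_matI) (auto simp: AR_def AQ_def row_matrix_def)
    define GQ where "GQ = transpose_mat AQ * AQ"
    have GQ: "GQ \<in> carrier_mat n n" using AQ by (simp add: GQ_def)
    have GR: "map_mat of_rat GQ = transpose_mat AR * AR"
      unfolding GQ_def AR_eq
      by (subst of_rat_hom.mat_hom_mult[of _ n "2*n"]) (use AQ in \<open>auto simp: map_mat_transpose\<close>)
    have "(transpose_mat AR * AR) *\<^sub>v v = 0\<^sub>v n"
    proof -
      have "(transpose_mat AR * AR) *\<^sub>v v = transpose_mat AR *\<^sub>v (AR *\<^sub>v v)"
        using AR v by (simp add: assoc_mult_mat_vec[of _ n "2*n" _ n])
      also have "\<dots> = 0\<^sub>v n" using AR v(3) by (intro eq_vecI) (auto simp: scalar_prod_def)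
      finally show ?thesis .
    qed
    then have "det (transpose_mat AR * AR) = 0"
      using det_0_iff_vec_prod_zero_field[of "transpose_mat AR * AR" n] AR v by auto
    then have "det GQ = 0" unfolding GR[symmetric] of_rat_hom.hom_det by simp
    then obtain w where w: "w \<in> carrier_vec n" "w \<noteq> 0\<^sub>v n" "GQ *\<^sub>v w = 0\<^sub>v n"
      using det_0_iff_vec_prod_zero_field[OF GQ] by blast
    define y where "y = AQ *\<^sub>v w"
    have y: "y \<in> carrier_vec (2*n)" using AQ w by (simp add: y_def)
    have "(transpose_mat AQ *\<^sub>v y) \<bullet> w = y \<bullet> (AQ *\<^sub>v w)"
      by (rule transpose_vec_mult_scalar[OF AQ w(1) y])
    moreover have "transpose_mat AQ *\<^sub>v y = 0\<^sub>v n"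
      using w AQ unfolding y_def GQ_def[symmetric] by (metis GQ_def assoc_mult_mat_vec transpose_carrier_mat)
    ultimately have yy: "y \<bullet> y = 0" using w by (simp add: y_def)
    have y0: "y $ k = 0" if "k < 2*n" for k
    proof -
      have "(\<Sum>k\<in>{0..<2*n}. y $ k * y $ k) = 0" using yy y by (simp add: scalar_prod_def)
      then have "\<forall>k\<in>{0..<2*n}. y $ k * y $ k = 0"
        by (subst sum_nonneg_eq_0_iff[symmetric]) auto
      then show ?thesis using that by auto
    qed
    obtain j where j: "j < n" "w $ j \<noteq> 0" using w by (metis dim_vec carrier_vecD eq_vecI index_zero_vec(1) index_zero_vec(2))
    have "(\<Sum>l<n. of_nat (r k l) * w $ l) = 0" if "k < 2*n" for k
    proof -
      have "y $ k = (\<Sum>l<n. of_nat (r k l) * w $ l)"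
        using that AQ w by (simp add: y_def AQ_def scalar_prod_def lessThan_atLeast0)
      thus ?thesis using y0[OF that] by simp
    qed
    then show ?thesis using j by (intro exI[of _ "\<lambda>l. w $ l"]) blast
  qed
qed

lemma rat_to_int:
  fixes w :: "nat \<Rightarrow> rat" and c :: "nat \<Rightarrow> nat \<Rightarrow> nat"
  assumes nz: "\<exists>j<n. w j \<noteq> 0" and ker: "\<forall>k<m. (\<Sum>j<n. of_nat (c k j) * w j) = 0"
  shows "\<exists>u::nat\<Rightarrow>int. (\<exists>j<n. u j \<noteq> 0) \<and> (\<forall>k<m. (\<Sum>j<n. int (c k j) * u j) = 0)"
proof -
  define a where "a j = fst (quotient_of (w j))" for j
  define b where "b j = snd (quotient_of (w j))" for j
  have qa: "quotient_of (w j) = (a j, b j)" for j by (simp add: a_def b_def)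
  have b: "b j > 0" for j using quotient_of_denom_pos[OF qa] .
  have wab: "w j = of_int (a j) / of_int (b j)" for j using quotient_of_div[OF qa] .
  define D where "D = (\<Prod>j<n. b j)"
  have D: "D > 0" unfolding D_def by (rule prod_pos) (use b in auto)
  define u where "u j = a j * (D div b j)" for j
  have uw: "of_int (u j) = w j * of_int D" if "j < n" for j
  proof -
    have "b j dvd D" unfolding D_def using that by (intro dvd_prodI) auto
    then have "D = b j * (D div b j)" by simp
    then have "w j * of_int D = of_int (a j) / of_int (b j) * (of_int (b j) * of_int (D div b j))"
      by (metis wab of_int_mult)
    also have "\<dots> = of_int (a j) * of_int (D div b j)" using b[of j] by simp
    finally show ?thesis by (simp add: u_def)
  qed
  have "(\<Sum>j<n. int (c k j) * u j) = 0" if "k < m" for k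
  proof -
    have "(of_int (\<Sum>j<n. int (c k j) * u j) :: rat) = (\<Sum>j<n. of_nat (c k j) * (w j * of_int D))"
      by (simp add: uw)
    also have "\<dots> = of_int D * (\<Sum>j<n. of_nat (c k j) * w j)"
      by (simp add: sum_distrib_left algebra_simps)
    also have "\<dots> = 0" using ker that by simp
    finally have "(of_int (\<Sum>j<n. int (c k j) * u j) :: rat) = 0" .
    then show ?thesis by (simp only: of_int_eq_0_iff)
  qed
  moreover obtain j where "j < n" "w j \<noteq> 0" using nz by blast
  then have "u j \<noteq> 0" using uw[of j] D by auto
  ultimately show ?thesis using \<open>j < n\<close> by blast
qed

lemma prim:
  fixes p :: nat and c :: "nat \<Rightarrow> nat \<Rightarrow> nat"
  assumes p: "prime p"
  shows "j0 < n \<Longrightarrow> u j0 \<noteq> 0 \<Longrightarrow> (\<forall>k<m. (\<Sum>j<n. int (c k j) * u j) = 0) \<Longrightarrow>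
    \<exists>u'. (\<forall>k<m. (\<Sum>j<n. int (c k j) * u' j) = 0) \<and> (\<exists>j<n. \<not> int p dvd u' j)"
proof (induction "nat \<bar>u j0\<bar>" arbitrary: u rule: less_induct)
  case less
  show ?case
  proof (cases "\<exists>j<n. \<not> int p dvd u j")
    case True then show ?thesis using less.prems by blast
  next
    case False
    define u' where "u' j = u j div int p" for j
    have uu: "u j = int p * u' j" if "j < n" for j using False that by (simp add: u'_def)
    have p2: "p \<ge> 2" using p prime_ge_2_nat by blast
    have "(\<Sum>j<n. int (c k j) * u' j) = 0" if "k < m" for k
    proof -
      have "int p * (\<Sum>j<n. int (c k j) * u' j) = (\<Sum>j<n. int (c k j) * u j)"
        by (simp add: sum_distrib_left uu algebra_simps)
      then show ?thesis using less.prems(3) that p2 by simp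
    qed
    moreover have "u' j0 \<noteq> 0" using uu[OF less.prems(1)] less.prems(2) by auto
    moreover have "nat \<bar>u' j0\<bar> < nat \<bar>u j0\<bar>"
    proof -
      have "\<bar>u j0\<bar> = int p * \<bar>u' j0\<bar>" using uu[OF less.prems(1)] by (simp add: abs_mult)
      moreover have "\<bar>u' j0\<bar> > 0" using \<open>u' j0 \<noteq> 0\<close> by simp
      ultimately show ?thesis using p2 by (simp add: nat_less_eq_zless)
    qed
    ultimately show ?thesis using less.hyps less.prems(1) by blast
  qed
qed

lemma kernel_mod:
  fixes p :: nat and r :: "nat \<Rightarrow> nat \<Rightarrow> nat"
  assumes p: "prime p" and rk: "vec_space.rank (2*n) (row_matrix n r) < n"
  shows "\<exists>v \<in> {0..<n} \<rightarrow>\<^sub>E {0..<p}. (\<exists>j<n. v j \<noteq> 0) \<and> (\<forall>k<2*n. dotp n (r k) v mod p = 0)"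
proof -
  obtain w where w: "\<exists>j<n. w j \<noteq> 0" "\<forall>k<2*n. (\<Sum>j<n. of_nat (r k j) * w j) = (0::rat)"
    using kernel_rat[OF rk] by blast
  obtain u where u: "\<exists>j<n. u j \<noteq> 0" "\<forall>k<2*n. (\<Sum>j<n. int (r k j) * u j) = 0"
    using rat_to_int[OF w] by blast
  then obtain j0 where "j0 < n" "u j0 \<noteq> 0" by blast
  from prim[OF p this u(2)] obtain u' where u':
    "\<forall>k<2*n. (\<Sum>j<n. int (r k j) * u' j) = 0" "\<exists>j<n. \<not> int p dvd u' j" by blast
  have p0: "p > 0" using p prime_gt_0_nat by blast
  define v where "v j = (if j < n then nat (u' j mod int p) else undefined)" for j
  have vF: "v \<in> {0..<n} \<rightarrow>\<^sub>E {0..<p}"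
    using p0 by (auto simp: v_def PiE_iff extensional_def nat_less_iff)
  have vnz: "\<exists>j<n. v j \<noteq> 0"
  proof -
    obtain j where "j < n" "\<not> int p dvd u' j" using u'(2) by blast
    then have "u' j mod int p \<noteq> 0" by (simp add: dvd_eq_mod_eq_0)
    moreover have "u' j mod int p \<ge> 0" using p0 by simp
    ultimately show ?thesis using \<open>j < n\<close> by (intro exI[of _ j]) (simp add: v_def)
  qed
  have "dotp n (r k) v mod p = 0" if "k < 2*n" for k
  proof -
    have "int (dotp n (r k) v) = (\<Sum>j<n. int (r k j) * (u' j mod int p))"
      using p0 by (simp add: dotp_def v_def)
    then have "int (dotp n (r k) v) mod int p = (\<Sum>j<n. int (r k j) * (u' j mod int p)) mod int p" by simp
    also have "\<dots> = (\<Sum>j<n. int (r k j) * (u' j mod int p) mod int p) mod int p"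
      by (simp add: mod_sum_eq)
    also have "\<dots> = (\<Sum>j<n. int (r k j) * u' j mod int p) mod int p"
      by (simp add: mod_mult_right_eq)
    also have "\<dots> = (\<Sum>j<n. int (r k j) * u' j) mod int p"
      by (simp add: mod_sum_eq)
    also have "\<dots> = 0" using u'(1) that by simp
    finally have "int (dotp n (r k) v mod p) = 0" by (simp add: of_nat_mod)
    then show ?thesis by simp
  qed
  then show ?thesis using vF vnz by blast
qed

lemma card_H:
  fixes p :: nat and v :: "nat \<Rightarrow> nat"
  assumes p: "prime p" and vF: "v \<in> {0..<n} \<rightarrow>\<^sub>E {0..<p}" and j0: "j0 < n" "v j0 \<noteq> 0"
  shows "card {s \<in> {0..<n} \<rightarrow>\<^sub>E {0..<p}. dotp n s v mod p = 0} \<le> p ^ (n - 1)"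
proof -
  let ?H = "{s \<in> {0..<n} \<rightarrow>\<^sub>E {0..<p}. dotp n s v mod p = 0}"
  let ?D = "{0..<n} - {j0}"
  have pi: "prime (int p)" using p by simp
  have vj0: "\<not> int p dvd int (v j0)"
  proof
    assume "int p dvd int (v j0)"
    then have "p dvd v j0" by simp
    moreover have "v j0 < p" using vF j0 by auto
    ultimately show False using j0(2) by (simp add: nat_dvd_not_less)
  qed
  have inj: "inj_on (\<lambda>s. restrict s ?D) ?H"
  proof (rule inj_onI)
    fix s s' assume s: "s \<in> ?H" and s': "s' \<in> ?H" and eq: "restrict s ?D = restrict s' ?D"
    have oth: "s j = s' j" if "j < n" "j \<noteq> j0" for j
      using fun_cong[OF eq, of j] that by simp
    have "int (dotp n s v) - int (dotp n s' v) = (\<Sum>j<n. (int (s j) - int (s' j)) * int (v j))"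
      by (simp add: dotp_def sum_subtractf algebra_simps)
    also have "\<dots> = (int (s j0) - int (s' j0)) * int (v j0)"
    proof -
      have "(\<Sum>j<n. (int (s j) - int (s' j)) * int (v j)) = (\<Sum>j\<in>{j0}. (int (s j) - int (s' j)) * int (v j))"
        by (rule sum.mono_neutral_right) (use j0 oth in auto)
      then show ?thesis by simp
    qed
    finally have dd: "int (dotp n s v) - int (dotp n s' v) = (int (s j0) - int (s' j0)) * int (v j0)" .
    have "int p dvd int (dotp n s v)" "int p dvd int (dotp n s' v)"
      using s s' by (auto simp: dvd_eq_mod_eq_0 simp flip: of_nat_mod)
    then have "int p dvd (int (s j0) - int (s' j0)) * int (v j0)" using dd by (metis dvd_diff)
    then have "int p dvd (int (s j0) - int (s' j0))" using vj0 pi prime_dvd_mult_iff by blast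
    moreover have "s j0 < p" "s' j0 < p" using s s' j0 by auto
    moreover have "\<bar>int (s j0) - int (s' j0)\<bar> < int p" using \<open>s j0 < p\<close> \<open>s' j0 < p\<close> by linarith
    ultimately have "int (s j0) - int (s' j0) = 0"
      using dvd_imp_le_int[of "int (s j0) - int (s' j0)" "int p"] by fastforce
    then have "s j0 = s' j0" by simp
    then show "s = s'"
    proof -
      have "s j = s' j" for j
      proof (cases "j < n")
        case True then show ?thesis using oth \<open>s j0 = s' j0\<close> by (cases "j = j0") auto
      next
        case False then show ?thesis using s s' by (auto simp: PiE_iff extensional_def)
      qed
      then show ?thesis by blast
    qed
  qed
  have img: "(\<lambda>s. restrict s ?D) ` ?H \<subseteq> ?D \<rightarrow>\<^sub>E {0..<p}"
    by (rule image_subsetI) (auto simp: restrict_PiE_iff PiE_iff)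
  have "card ?H \<le> card (?D \<rightarrow>\<^sub>E {0..<p})"
    by (rule card_inj_on_le[OF inj img]) (simp add: finite_PiE)
  also have "\<dots> = p ^ (n - 1)" using j0 by (simp add: card_PiE)
  finally show ?thesis .
qed

theorem lemma5p3:
  fixes lam n t i :: nat
    and a :: "nat \<Rightarrow> 'r::comm_ring_1"
    and e :: "nat \<Rightarrow> nat \<Rightarrow> nat"
  assumes "prime lam"
    and "\<forall>k<t. a k \<noteq> 0"
    and "\<forall>k<t. \<forall>l<t. k \<noteq> l \<longrightarrow> (\<exists>j<n. e k j \<noteq> e l j)"
    and "i < t"
    and "real (card {s \<in> {0..<n} \<rightarrow>\<^sub>E {0..<lam}. avoids_collision n t e i s})
           \<ge> 3 / 4 * real lam ^ n"
  shows "real (card {r \<in> {0..<2*n} \<rightarrow>\<^sub>E ({0..<n} \<rightarrow>\<^sub>E {0..<lam}).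
                (\<forall>k<2*n. avoids_collision n t e i (r k)) \<and>
                vec_space.rank (2*n) (row_matrix n r) < n})
         \<le> (9 * real lam / 16) powr (- real n) *
           real (card {r \<in> {0..<2*n} \<rightarrow>\<^sub>E ({0..<n} \<rightarrow>\<^sub>E {0..<lam}).
                (\<forall>k<2*n. avoids_collision n t e i (r k))})"
proof -
  let ?F = "{0..<n} \<rightarrow>\<^sub>E {0..<lam}"
  define S where "S = {s \<in> ?F. avoids_collision n t e i s}"
  define B where "B = {r \<in> {0..<2*n} \<rightarrow>\<^sub>E ?F.
                (\<forall>k<2*n. avoids_collision n t e i (r k)) \<and>
                vec_space.rank (2*n) (row_matrix n r) < n}"
  define H where "H v = {s \<in> ?F. dotp n s v mod lam = 0}" for v
  define V0 where "V0 = {v \<in> ?F. \<exists>j<n. v j \<noteq> 0}"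
  have p: "prime lam" by fact
  have p0: "lam > 0" using p prime_gt_0_nat by blast
  have Aeq: "{r \<in> {0..<2*n} \<rightarrow>\<^sub>E ?F. (\<forall>k<2*n. avoids_collision n t e i (r k))}
      = {0..<2*n} \<rightarrow>\<^sub>E S"
    by (auto simp: S_def PiE_iff extensional_def)
  have cardA: "card ({0..<2*n} \<rightarrow>\<^sub>E S) = card S ^ (2*n)"
    by (simp add: card_PiE)
  have sub: "B \<subseteq> (\<Union>v\<in>V0. {0..<2*n} \<rightarrow>\<^sub>E H v)"
  proof
    fix r assume r: "r \<in> B"
    have rF: "r \<in> {0..<2*n} \<rightarrow>\<^sub>E ?F" and rk: "vec_space.rank (2*n) (row_matrix n r) < n"
      using r unfolding B_def by auto
    obtain v where v: "v \<in> ?F" "\<exists>j<n. v j \<noteq> 0" "\<forall>k<2*n. dotp n (r k) v mod lam = 0"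
      using kernel_mod[OF p rk] by blast
    have "r k \<in> H v" if "k \<in> {0..<2*n}" for k
      using rF v(3) that unfolding H_def by (simp add: PiE_iff)
    then have "r \<in> {0..<2*n} \<rightarrow>\<^sub>E H v" using rF by (simp add: PiE_iff)
    moreover have "v \<in> V0" using v unfolding V0_def by blast
    ultimately show "r \<in> (\<Union>v\<in>V0. {0..<2*n} \<rightarrow>\<^sub>E H v)" by blast
  qed
  have finV0: "finite V0" unfolding V0_def by (simp add: finite_PiE)
  have cH: "card ({0..<2*n} \<rightarrow>\<^sub>E H v) \<le> (lam ^ (n - 1)) ^ (2*n)" if vV: "v \<in> V0" for v
  proof -
    obtain j0 where "j0 < n" "v j0 \<noteq> 0" using vV unfolding V0_def by blast
    then have "card (H v) \<le> lam ^ (n - 1)"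
      using card_H[OF p _ \<open>j0 < n\<close>] vV unfolding H_def V0_def by blast
    then show ?thesis by (simp add: card_PiE power_mono)
  qed
  have "card B \<le> card (\<Union>v\<in>V0. {0..<2*n} \<rightarrow>\<^sub>E H v)"
    by (rule card_mono[OF _ sub]) (simp add: finV0 H_def finite_PiE)
  also have "\<dots> \<le> (\<Sum>v\<in>V0. card ({0..<2*n} \<rightarrow>\<^sub>E H v))" by (rule card_UN_le[OF finV0])
  also have "\<dots> \<le> (\<Sum>v\<in>V0. (lam ^ (n - 1)) ^ (2*n))" by (rule sum_mono) (rule cH)
  also have "\<dots> = card V0 * (lam ^ (n - 1)) ^ (2*n)" by simp
  also have "\<dots> \<le> lam ^ n * (lam ^ (n - 1)) ^ (2*n)"
  proof -
    have "card V0 \<le> card ?F" by (rule card_mono) (auto simp: V0_def finite_PiE)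
    also have "card ?F = lam ^ n" by (simp add: card_PiE)
    finally show ?thesis by (rule mult_right_mono) simp
  qed
  finally have cB: "card B \<le> lam ^ n * (lam ^ (n - 1)) ^ (2*n)" .
  have ident: "lam ^ n * (lam ^ (n - 1)) ^ (2*n) * lam ^ n = (lam ^ n) ^ (2*n)"
  proof (cases n)
    case 0 then show ?thesis by simp
  next
    case (Suc m)
    have e1: "(lam ^ (n - 1)) ^ (2*n) = lam ^ (m * (2*n))" using Suc by (simp only: power_mult diff_Suc_1)
    have "lam ^ n * (lam ^ (n - 1)) ^ (2*n) * lam ^ n = lam ^ n * lam ^ (m * (2*n)) * lam ^ n"
      by (simp only: e1)
    also have "\<dots> = lam ^ (n + m * (2*n) + n)" by (simp only: power_add)
    also have "n + m * (2*n) + n = n * (2*n)" using Suc by (simp add: algebra_simps)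
    finally show ?thesis by (simp only: power_mult)
  qed
  define X where "X = real (lam ^ n * (lam ^ (n - 1)) ^ (2*n))"
  have X: "X * real lam ^ n = (real lam ^ n) ^ (2*n)"
  proof -
    have "real (lam ^ n * (lam ^ (n - 1)) ^ (2*n) * lam ^ n) = real ((lam ^ n) ^ (2*n))"
      using ident by (simp only:)
    then show ?thesis by (simp only: of_nat_mult of_nat_power X_def)
  qed
  have cS: "real (card S) \<ge> 3 / 4 * real lam ^ n" using assms(5) by (simp add: S_def)
  have cS2: "real (card S) ^ (2*n) \<ge> (3 / 4 * real lam ^ n) ^ (2*n)"
    by (rule power_mono[OF cS]) simp
  have eq1: "(3 / 4 * real lam ^ n) ^ (2*n) = (9/16) ^ n * (real lam ^ n) ^ (2*n)"
  proof -
    have "(3 / 4 * real lam ^ n) ^ (2*n) = ((3 / 4 * real lam ^ n) ^ 2) ^ n" by (simp only: power_mult)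
    also have "(3 / 4 * real lam ^ n) ^ 2 = 9/16 * (real lam ^ n) ^ 2" by (simp add: power2_eq_square)
    also have "(9/16 * (real lam ^ n) ^ 2) ^ n = (9/16) ^ n * ((real lam ^ n) ^ 2) ^ n" by (rule power_mult_distrib)
    also have "((real lam ^ n) ^ 2) ^ n = (real lam ^ n) ^ (2*n)" by (simp only: power_mult)
    finally show ?thesis .
  qed
  define L where "L = real lam ^ n"
  define c where "c = (9/16::real) ^ n"
  have lpos: "L > 0" unfolding L_def using p0 by (intro zero_less_power) simp
  have cpos: "c > 0" unfolding c_def by (intro zero_less_power) simp
  have pw: "(9 * real lam / 16) powr (- real n) = 1 / (c * L)"
  proof -
    have b: "9 * real lam / 16 > 0" using p0 by (intro divide_pos_pos mult_pos_pos) auto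
    have bb: "9 * real lam / 16 = 9/16 * real lam" by simp
    have "(9 * real lam / 16) powr (real n) = (9 * real lam / 16) ^ n" by (rule powr_realpow[OF b])
    also have "\<dots> = (9/16 * real lam) ^ n" by (simp only: bb)
    also have "(9/16 * real lam) ^ n = c * L" unfolding c_def L_def by (rule power_mult_distrib)
    finally have "(9 * real lam / 16) powr (real n) = c * L" .
    then show ?thesis by (simp only: powr_minus inverse_eq_divide)
  qed
  have XL: "X * L = L ^ (2*n)" using X by (simp add: L_def)
  have alg: "\<And>c L M X::real. c > 0 \<Longrightarrow> L > 0 \<Longrightarrow> X * L = M \<Longrightarrow> X = 1 / (c * L) * (c * M)"
    by (simp add: field_simps)
  have "real (card B) \<le> X" using cB unfolding X_def by (simp only: of_nat_le_iff)
  also have "X = 1 / (c * L) * (c * L ^ (2*n))" by (rule alg[OF cpos lpos XL])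
  also have "\<dots> \<le> 1 / (c * L) * real (card S) ^ (2*n)"
  proof (rule mult_left_mono)
    show "c * L ^ (2*n) \<le> real (card S) ^ (2*n)" using cS2 eq1 unfolding c_def L_def by simp
    show "0 \<le> 1 / (c * L)" using cpos lpos by simp
  qed
  finally have fin: "real (card B) \<le> (9 * real lam / 16) powr (- real n) * real (card ({0..<2*n} \<rightarrow>\<^sub>E S))"
    unfolding pw cardA of_nat_power .
  show ?thesis using fin by (simp only: B_def Aeq)
qed

end
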